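(* Let $k\ge 1$, let $\epsilon>0$, let $(\varphi_0(t))_{t\in\mathbb{N}_{\ge0}}$ be a real sequence, and let $\alpha_1,\dots,\alpha_k:\mathbb{R}\to\mathbb{R}$ be continuous, strictly increasing functions with $\alpha_j(0)=0$ and $\alpha_j(r)\le r$ for all $r\ge0$. Define recursively, for $j\in\{1,\dots,k\}$ and $t\in\mathbb{N}_{\ge0}$, $$\varphi_j(t):=\varphi_{j-1}(t+1)-\varphi_{j-1}(t)+\alpha_j(\varphi_{j-1}(t)).$$ Assume $\varphi_j(0)>0$ for all $j\in\{0,\dots,k-1\}$ and $\varphi_k(t)\ge\epsilon$ for all $t\in\mathbb{N}_{\ge0}$. Then $\varphi_j(t)>0$ for all $j\in\{0,\dots,k-1\}$ and all $t\in\mathbb{N}_{\ge0}$; in particular $\varphi_0(t)>0$ for all $t$.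
   Context: In the paper this is applied with $\varphi_0(t)=a_{i,t}$, an auxiliary variable generated by an auxiliary system of relative degree $k=m+1-i$, to guarantee that $a_{i,t}$ stays positive; the sets $\mathcal{B}_{j}=\{\varphi_j>0\}$, $j=0,\dots,k-1$, are then forward invariant. *)

theory Defs
  imports Complex_Main
begin

fun phi_seq :: "(nat \<Rightarrow> real \<Rightarrow> real) \<Rightarrow> (nat \<Rightarrow> real) \<Rightarrow> nat \<Rightarrow> nat \<Rightarrow> real" where
  "phi_seq alpha phi0 0 t = phi0 t"
| "phi_seq alpha phi0 (Suc j) t =
     phi_seq alpha phi0 j (Suc t) - phi_seq alpha phi0 j t + alpha (Suc j) (phi_seq alpha phi0 j t)"

end

theory Submission
  imports Defs
begin

theorem mainTheorem2:
  fixes k :: nat and eps :: real and phi0 :: "nat \<Rightarrow> real"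
    and alpha :: "nat \<Rightarrow> real \<Rightarrow> real"
  assumes "k \<ge> 1" and "eps > 0"
    and "\<And>j. j \<in> {1..k} \<Longrightarrow> continuous_on UNIV (alpha j)"
    and "\<And>j. j \<in> {1..k} \<Longrightarrow> strict_mono (alpha j)"
    and "\<And>j. j \<in> {1..k} \<Longrightarrow> alpha j 0 = 0"
    and "\<And>j r. j \<in> {1..k} \<Longrightarrow> r \<ge> 0 \<Longrightarrow> alpha j r \<le> r"
    and "\<And>j. j < k \<Longrightarrow> phi_seq alpha phi0 j 0 > 0"
    and "\<And>t. phi_seq alpha phi0 k t \<ge> eps"
  shows "\<forall>j<k. \<forall>t. phi_seq alpha phi0 j t > 0"
proof -
  have "\<forall>j<k. phi_seq alpha phi0 j t > 0" for t
  proof (induction t)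
    case 0 then show ?case using assms(7) by blast
  next
    case (Suc t)
    show ?case
    proof (intro allI impI)
      fix j assume j: "j < k"
      have p: "phi_seq alpha phi0 (Suc j) t > 0"
      proof (cases "Suc j = k")
        case True then show ?thesis using assms(2) assms(8)[of t] by (metis less_le_trans)
      next
        case False then have "Suc j < k" using j by simp
        then show ?thesis using Suc.IH by blast
      qed
      have q: "phi_seq alpha phi0 j t > 0" using Suc.IH j by simp
      have "alpha (Suc j) (phi_seq alpha phi0 j t) \<le> phi_seq alpha phi0 j t"
        using assms(6)[of "Suc j" "phi_seq alpha phi0 j t"] q j by simp
      then show "phi_seq alpha phi0 j (Suc t) > 0" using p by simp
    qed
  qed
  then show ?thesis by blast
qed

end
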